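(* Let $r=r(n)\ge3$, $m=m(n)$, $k=k(n)$ be integers with $m=o(r^{-3}n^{3/2})$, $1\le k\le m$ and $k=o\bigl(\frac{n^3}{r^6m^2}\bigr)$, let $K$ be a linear $r$-graph on $[n]$ with edges $e_1,\dots,e_k$, and let $1\le i\le k$. Let $H'$ be chosen uniformly at random from $\mathcal{L}_r(n,m:\overline{e}_i)$, and let $E^*$ be the set of $r$-subsets $e^*$ of $[n]$ with $|e^*\cap e_i|\ge2$. Then, as $n\to\infty$, \[ \mathbb{P}\bigl[\text{some edge of }H'\text{ lies in }E^*\bigr]=\frac{(m-i+1)\binom r2\binom{n-r}{r-2}}{N}+O\Bigl(\frac{r^6m^2}{n^3}\Bigr). \]
   Context: $N=\binom nr$. An $r$-graph on $[n]$ is a set of $r$-subsets of $[n]$ (edges); it is linear if any two distinct edges share at most one vertex. $\mathcal{L}_r(n,m)$ is the set of linear $r$-graphs on $[n]$ with exactly $m$ edges. $\mathcal{L}_r(n,m:\overline{e}_i)$ is the set of $H\in\mathcal{L}_r(n,m)$ that contain $e_1,\dots,e_{i-1}$ as edges but do not contain $e_i$. *)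

theory Defs
  imports Complex_Main "HOL-Library.Landau_Symbols"
begin

definition rsubsets :: "nat \<Rightarrow> nat \<Rightarrow> nat set set" where
  "rsubsets n r = {e. e \<subseteq> {1..n} \<and> card e = r}"

definition linear_rgraph :: "nat \<Rightarrow> nat \<Rightarrow> nat set set \<Rightarrow> bool" where
  "linear_rgraph n r H \<longleftrightarrow> H \<subseteq> rsubsets n r \<and>
     (\<forall>e\<in>H. \<forall>f\<in>H. e \<noteq> f \<longrightarrow> card (e \<inter> f) \<le> 1)"

definition Lin :: "nat \<Rightarrow> nat \<Rightarrow> nat \<Rightarrow> nat set set set" where
  "Lin r n m = {H. linear_rgraph n r H \<and> card H = m}"

text \<open>L_r(n,m : not e_i), edges e_1..e_k given as list es (es!0 = e_1), i is 1-based.\<close>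
definition Lin_bar :: "nat \<Rightarrow> nat \<Rightarrow> nat \<Rightarrow> nat set list \<Rightarrow> nat \<Rightarrow> nat set set set" where
  "Lin_bar r n m es i = {H \<in> Lin r n m. (\<forall>j < i - 1. es ! j \<in> H) \<and> es ! (i - 1) \<notin> H}"

definition Estar :: "nat \<Rightarrow> nat \<Rightarrow> nat set \<Rightarrow> nat set set" where
  "Estar r n ei = {e \<in> rsubsets n r. card (e \<inter> ei) \<ge> 2}"

definition prob_hit :: "nat \<Rightarrow> nat \<Rightarrow> nat \<Rightarrow> nat set list \<Rightarrow> nat \<Rightarrow> real" where
  "prob_hit r n m es i =
     real (card {H \<in> Lin_bar r n m es i. \<exists>e\<in>H. e \<in> Estar r n (es ! (i - 1))})
     / real (card (Lin_bar r n m es i))"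

end

theory Submission
  imports Defs
begin

lemma finite_rsubsets: "finite (rsubsets n r)"
  unfolding rsubsets_def by (rule finite_subset[of _ "Pow {1..n}"]) auto

lemma card_rsubsets: "card (rsubsets n r) = n choose r"
  unfolding rsubsets_def using n_subsets[of "{1..n}" r] by simp

lemma choose_le_pow: "a choose t \<le> a ^ t"
  by (cases "t \<le> a") (auto simp: binomial_le_pow binomial_eq_0)

lemma card_supsets: 
  assumes "card T = t" "finite T"
  shows "card {f \<in> rsubsets n r. T \<subseteq> f} \<le> (n - t) choose (r - t)"
proof (cases "T \<subseteq> {1..n}")
  case False
  then have E0: "{f \<in> rsubsets n r. T \<subseteq> f} = {}" unfolding rsubsets_def by auto
  show ?thesis unfolding E0 by simp
next
  case True
  have "card {f \<in> rsubsets n r. T \<subseteq> f} \<le> card {B. B \<subseteq> {1..n} - T \<and> card B = r - t}"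
  proof (rule card_inj_on_le[where f = "\<lambda>f. f - T"])
    show "inj_on (\<lambda>f. f - T) {f \<in> rsubsets n r. T \<subseteq> f}"
      by (rule inj_onI) blast
    show "(\<lambda>f. f - T) ` {f \<in> rsubsets n r. T \<subseteq> f} \<subseteq> {B. B \<subseteq> {1..n} - T \<and> card B = r - t}"
    proof
      fix B assume "B \<in> (\<lambda>f. f - T) ` {f \<in> rsubsets n r. T \<subseteq> f}"
      then obtain f where f: "f \<in> rsubsets n r" "T \<subseteq> f" "B = f - T" by auto
      have "finite f" using f(1) unfolding rsubsets_def by (auto intro: finite_subset)
      then have "card B = r - t" using f assms unfolding rsubsets_def
        by (simp add: card_Diff_subset[OF assms(2)])
      then show "B \<in> {B. B \<subseteq> {1..n} - T \<and> card B = r - t}" using f unfolding rsubsets_def by auto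
    qed
  qed simp
  also have "\<dots> = (n - t) choose (r - t)"
    using n_subsets[of "{1..n} - T" "r - t"] True assms by (simp add: card_Diff_subset)
  finally show ?thesis .
qed

lemma count_ge:
  assumes "finite S"
  shows "card {f \<in> rsubsets n r. t \<le> card (f \<inter> S)} \<le> (card S choose t) * ((n - t) choose (r - t))"
proof -
  let ?I = "{T. T \<subseteq> S \<and> card T = t}"
  have sub: "{f \<in> rsubsets n r. t \<le> card (f \<inter> S)} \<subseteq> (\<Union>T\<in>?I. {f \<in> rsubsets n r. T \<subseteq> f})"
  proof
    fix f assume f: "f \<in> {f \<in> rsubsets n r. t \<le> card (f \<inter> S)}"
    then have "t \<le> card (f \<inter> S)" by simp
    then obtain T where "T \<subseteq> f \<inter> S" "card T = t" "finite T" by (rule obtain_subset_with_card_n)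
    then show "f \<in> (\<Union>T\<in>?I. {f \<in> rsubsets n r. T \<subseteq> f})" using f by auto
  qed
  have fI: "finite ?I" using assms by auto
  have "card {f \<in> rsubsets n r. t \<le> card (f \<inter> S)} \<le> card (\<Union>T\<in>?I. {f \<in> rsubsets n r. T \<subseteq> f})"
    by (rule card_mono[OF _ sub]) (simp add: finite_rsubsets fI)
  also have "\<dots> \<le> (\<Sum>T\<in>?I. card {f \<in> rsubsets n r. T \<subseteq> f})" by (rule card_UN_le[OF fI])
  also have "\<dots> \<le> (\<Sum>T\<in>?I. (n - t) choose (r - t))"
  proof (rule sum_mono)
    fix T assume "T \<in> ?I"
    then show "card {f \<in> rsubsets n r. T \<subseteq> f} \<le> (n - t) choose (r - t)"
      using assms by (intro card_supsets) (auto intro: finite_subset)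
  qed
  also have "\<dots> = (card S choose t) * ((n - t) choose (r - t))"
    using n_subsets[OF assms, of t] by simp
  finally show ?thesis .
qed

lemma exact2:
  assumes e: "e \<in> rsubsets n r" and r: "r \<ge> 2"
  shows "card {f \<in> rsubsets n r. card (f \<inter> e) = 2} = (r choose 2) * ((n - r) choose (r - 2))"
proof -
  let ?X = "{f \<in> rsubsets n r. card (f \<inter> e) = 2}"
  let ?P = "{p. p \<subseteq> e \<and> card p = 2}"
  let ?Q = "{B. B \<subseteq> {1..n} - e \<and> card B = r - 2}"
  have esub: "e \<subseteq> {1..n}" and ecard: "card e = r" using e unfolding rsubsets_def by auto
  have fe: "finite e" using esub by (auto intro: finite_subset)
  have cP: "card ?P = r choose 2" using n_subsets[OF fe] ecard by simp
  have cQ: "card ?Q = (n - r) choose (r - 2)" using n_subsets[of "{1..n} - e" "r-2"] esub ecard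
    by (simp add: card_Diff_subset fe)
  have fPQ: "finite (?P \<times> ?Q)" using fe by auto
  have inj1: "inj_on (\<lambda>f. (f \<inter> e, f - e)) ?X"
  proof (rule inj_onI)
    fix x y assume "(x \<inter> e, x - e) = (y \<inter> e, y - e)"
    then have "x \<inter> e = y \<inter> e" "x - e = y - e" by auto
    then show "x = y" by (metis Int_Diff_Un)
  qed
  have img1: "(\<lambda>f. (f \<inter> e, f - e)) ` ?X \<subseteq> ?P \<times> ?Q"
  proof
    fix y assume "y \<in> (\<lambda>f. (f \<inter> e, f - e)) ` ?X"
    then obtain f where f: "f \<in> rsubsets n r" "card (f \<inter> e) = 2" "y = (f \<inter> e, f - e)" by auto
    have ff: "finite f" "f \<subseteq> {1..n}" "card f = r" using f(1) unfolding rsubsets_def by (auto intro: finite_subset)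
    then have "card (f - e) = r - 2" using f(2) by (simp add: card_Diff_subset_Int)
    then show "y \<in> ?P \<times> ?Q" using f ff(2) by auto
  qed
  have le1: "card ?X \<le> card (?P \<times> ?Q)" by (rule card_inj_on_le[OF inj1 img1 fPQ])
  have inj2: "inj_on (\<lambda>x. fst x \<union> snd x) (?P \<times> ?Q)"
  proof (rule inj_onI)
    fix x y assume x: "x \<in> ?P \<times> ?Q" and y: "y \<in> ?P \<times> ?Q" and xy: "fst x \<union> snd x = fst y \<union> snd y"
    have "fst x = (fst x \<union> snd x) \<inter> e" "snd x = (fst x \<union> snd x) - e" using x by auto
    moreover have "fst y = (fst y \<union> snd y) \<inter> e" "snd y = (fst y \<union> snd y) - e" using y by auto
    ultimately show "x = y" using xy by (metis prod_eqI)
  qed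
  have img2: "(\<lambda>x. fst x \<union> snd x) ` (?P \<times> ?Q) \<subseteq> ?X"
  proof
    fix y assume "y \<in> (\<lambda>x. fst x \<union> snd x) ` (?P \<times> ?Q)"
    then obtain p B where pB: "p \<subseteq> e" "card p = 2" "B \<subseteq> {1..n} - e" "card B = r - 2" "y = p \<union> B" by auto
    have fp: "finite p" "finite B" using pB fe by (auto intro: finite_subset)
    have dj: "p \<inter> B = {}" using pB by auto
    have "card (p \<union> B) = card p + card B" by (rule card_Un_disjoint[OF fp dj])
    then have "card (p \<union> B) = r" using pB r by simp
    moreover have "(p \<union> B) \<inter> e = p" using pB by blast
    ultimately show "y \<in> ?X" using pB esub unfolding rsubsets_def by auto
  qed
  have le2: "card (?P \<times> ?Q) \<le> card ?X" by (rule card_inj_on_le[OF inj2 img2]) (simp add: finite_rsubsets)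
  have "card ?X = card (?P \<times> ?Q)" using le1 le2 by simp
  then show ?thesis using cP cQ by (simp add: card_cartesian_product)
qed


lemma card_lower:
  assumes "U - (X \<union> (\<Union>h\<in>I. B h)) \<subseteq> G" "finite G" "finite I" "finite X"
    "\<forall>h\<in>I. finite (B h)" "card X \<le> a" "\<forall>h\<in>I. card (B h) \<le> b" "card I \<le> c"
  shows "card U - (a + c * b) \<le> card G"
proof -
  have "card (\<Union>h\<in>I. B h) \<le> (\<Sum>h\<in>I. card (B h))" by (rule card_UN_le[OF assms(3)])
  also have "\<dots> \<le> (\<Sum>h\<in>I. b)" using assms(7) by (intro sum_mono) auto
  also have "\<dots> \<le> c * b" using assms(8) by simp
  finally have "card (X \<union> (\<Union>h\<in>I. B h)) \<le> a + c * b" using card_Un_le[of X "\<Union>h\<in>I. B h"] assms(6) by linarith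
  moreover have "card U - card (X \<union> (\<Union>h\<in>I. B h)) \<le> card (U - (X \<union> (\<Union>h\<in>I. B h)))"
    by (rule diff_card_le_card_Diff) (use assms in auto)
  moreover have "card (U - (X \<union> (\<Union>h\<in>I. B h))) \<le> card G" by (rule card_mono[OF assms(2,1)])
  ultimately show ?thesis by linarith
qed

lemma rs_props: "x \<in> rsubsets n r \<Longrightarrow> finite x \<and> card x = r \<and> x \<subseteq> {1..n}"
  unfolding rsubsets_def by (auto intro: finite_subset)

lemma Lin_props: "H \<in> Lin r n m \<Longrightarrow> H \<subseteq> rsubsets n r \<and> finite H \<and> card H = m
   \<and> (\<forall>x\<in>H. \<forall>y\<in>H. x \<noteq> y \<longrightarrow> card (x \<inter> y) \<le> 1)"
  unfolding Lin_def linear_rgraph_def using finite_subset[OF _ finite_rsubsets] by auto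

lemma swap_Lin:
  assumes H: "H \<in> Lin r n m" and r: "r \<ge> 2" and f: "f \<in> H" and g: "g \<in> rsubsets n r"
    and gh: "\<forall>h\<in>H - {f}. card (g \<inter> h) \<le> 1"
  shows "insert g (H - {f}) \<in> Lin r n m" "g \<notin> H - {f}"
proof -
  have P: "H \<subseteq> rsubsets n r" "finite H" "card H = m" "\<forall>x\<in>H. \<forall>y\<in>H. x \<noteq> y \<longrightarrow> card (x \<inter> y) \<le> 1"
    using Lin_props[OF H] by auto
  show gn: "g \<notin> H - {f}"
  proof
    assume "g \<in> H - {f}"
    then have "card (g \<inter> g) \<le> 1" using gh by blast
    then show False using rs_props[OF g] r by simp
  qed
  have "m > 0" using P f card_gt_0_iff by blast
  then have "card (insert g (H - {f})) = m" using gn P f by (simp add: card_Diff_singleton)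
  moreover have "linear_rgraph n r (insert g (H - {f}))"
    unfolding linear_rgraph_def
  proof (intro conjI ballI impI)
    show "insert g (H - {f}) \<subseteq> rsubsets n r" using P g by auto
  next
    fix x y assume "x \<in> insert g (H - {f})" "y \<in> insert g (H - {f})" "x \<noteq> y"
    then show "card (x \<inter> y) \<le> 1" using P(4) gh by (auto simp: Int_commute)
  qed
  ultimately show "insert g (H - {f}) \<in> Lin r n m" unfolding Lin_def by auto
qed

locale sw =
  fixes n r m :: nat and e :: "nat set" and F :: "nat set set"
  assumes r2: "r \<ge> 2" and e: "e \<in> rsubsets n r" and Fsub: "F \<subseteq> rsubsets n r"
    and Fe: "\<forall>h\<in>F. card (h \<inter> e) \<le> 1"
begin

lemma E_sub: "Estar r n e \<subseteq> rsubsets n r" unfolding Estar_def by auto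

lemma e_in_E: "e \<in> Estar r n e" using e r2 rs_props[OF e] unfolding Estar_def by auto

lemma F_E: "F \<inter> Estar r n e = {}" using Fe unfolding Estar_def by fastforce

lemma finite_E: "finite (Estar r n e)" using finite_subset[OF E_sub finite_rsubsets] .

lemma card_E_le: "card (Estar r n e) \<le> (r choose 2) * ((n - 2) choose (r - 2))"
proof -
  have "Estar r n e = {f \<in> rsubsets n r. 2 \<le> card (f \<inter> e)}" unfolding Estar_def by auto
  then show ?thesis using count_ge[of e n r 2] rs_props[OF e] by simp
qed

lemma blocked_g: "h \<in> rsubsets n r \<Longrightarrow>
   card {g \<in> rsubsets n r. 2 \<le> card (g \<inter> h)} \<le> (r choose 2) * ((n - 2) choose (r - 2))"
  using count_ge[of h n r 2] rs_props[of h n r] by simp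

lemma blocked_f:
  assumes h: "h \<in> rsubsets n r" "card (h \<inter> e) \<le> 1"
  shows "card {f \<in> Estar r n e. 2 \<le> card (f \<inter> h)} \<le> (2*r)^3 * ((n - 3) choose (r - 3))"
proof -
  have fin: "finite (e \<union> h)" using rs_props[OF e] rs_props[OF h(1)] by auto
  have sub: "{f \<in> Estar r n e. 2 \<le> card (f \<inter> h)} \<subseteq> {f \<in> rsubsets n r. 3 \<le> card (f \<inter> (e \<union> h))}"
  proof clarify
    fix f assume f: "f \<in> Estar r n e" "2 \<le> card (f \<inter> h)"
    have fr: "f \<in> rsubsets n r" "2 \<le> card (f \<inter> e)" using f(1) unfolding Estar_def by auto
    have ff: "finite (f \<inter> (e \<union> h))" using fin by auto
    show "f \<in> rsubsets n r \<and> 3 \<le> card (f \<inter> (e \<union> h))"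
    proof (rule ccontr)
      assume "\<not> ?thesis"
      then have c: "card (f \<inter> (e \<union> h)) \<le> 2" using fr by auto
      have s1: "f \<inter> e \<subseteq> f \<inter> (e \<union> h)" "f \<inter> h \<subseteq> f \<inter> (e \<union> h)" by auto
      have "card (f \<inter> e) \<le> card (f \<inter> (e \<union> h))" "card (f \<inter> h) \<le> card (f \<inter> (e \<union> h))"
        using card_mono[OF ff s1(1)] card_mono[OF ff s1(2)] by auto
      then have "f \<inter> e = f \<inter> (e \<union> h)" "f \<inter> h = f \<inter> (e \<union> h)"
        using card_subset_eq[OF ff s1(1)] card_subset_eq[OF ff s1(2)] c fr f by auto
      then have "f \<inter> e \<subseteq> h \<inter> e" by blast
      then have "card (f \<inter> e) \<le> card (h \<inter> e)" by (rule card_mono[rotated]) (use rs_props[OF h(1)] in auto)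
      then show False using fr h by simp
    qed
  qed
  have "card {f \<in> Estar r n e. 2 \<le> card (f \<inter> h)} \<le> card {f \<in> rsubsets n r. 3 \<le> card (f \<inter> (e \<union> h))}"
    by (rule card_mono[OF _ sub]) (simp add: finite_rsubsets)
  also have "\<dots> \<le> (card (e \<union> h) choose 3) * ((n - 3) choose (r - 3))" by (rule count_ge[OF fin])
  also have "\<dots> \<le> (2*r)^3 * ((n - 3) choose (r - 3))"
  proof -
    have "card (e \<union> h) \<le> 2 * r" using card_Un_le[of e h] rs_props[OF e] rs_props[OF h(1)] by simp
    then have "card (e \<union> h) choose 3 \<le> (2*r)^3" using choose_le_pow[of "card (e \<union> h)" 3]
      by (meson le_trans power_mono zero_le)
    then show ?thesis by simp
  qed
  finally show ?thesis .
qed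

end


lemma nat_diff_real: "a - b \<le> (c::nat) \<Longrightarrow> real a - real b \<le> real c"
proof (cases "b \<le> a")
  case True
  assume "a - b \<le> c" then show ?thesis using True by (metis of_nat_diff of_nat_le_iff)
next
  case False then show ?thesis by simp
qed

context sw begin

abbreviation "LL \<equiv> {H \<in> Lin r n m. F \<subseteq> H \<and> e \<notin> H}"
abbreviation "EE \<equiv> Estar r n e"
abbreviation "P2 \<equiv> (r choose 2) * ((n - 2) choose (r - 2))"

lemma finite_LL: "finite LL"
  by (rule finite_subset[of _ "Pow (rsubsets n r)"]) (use finite_rsubsets in \<open>auto dest!: Lin_props\<close>)

lemma finite_F: "finite F" using finite_subset[OF Fsub finite_rsubsets] .

lemma card_HF: "H \<in> LL \<Longrightarrow> card (H - F) = m - card F"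
  using Lin_props[of H r n m] finite_F by (simp add: card_Diff_subset)

lemma switch_upper:
  assumes D: "real (m+1) * real P2 \<le> real (n choose r)"
  shows "real (card {H \<in> LL. H \<inter> EE \<noteq> {}}) * (real (n choose r) - real (m+1) * real P2)
      \<le> real (card LL) * real (m - card F) * real (card EE)"
proof -
  define DD where "DD = real (n choose r) - real (m+1) * real P2"
  have DD0: "DD \<ge> 0" using D unfolding DD_def by simp
  define good where "good H f = {g \<in> rsubsets n r. g \<notin> EE \<and> (\<forall>h\<in>H-{f}. card (g \<inter> h) \<le> 1)}" for H f
  define T where "T = Sigma LL (\<lambda>H. Sigma (H \<inter> EE) (good H))"
  have fgood: "finite (good H f)" for H f unfolding good_def using finite_rsubsets by simp
  have goodcard: "DD \<le> real (card (good H f))" if H: "H \<in> LL" and f: "f \<in> H" for H f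
  proof -
    have HP: "H \<subseteq> rsubsets n r" "finite H" "card H = m" using Lin_props[of H r n m] H by auto
    have "card (rsubsets n r) - (P2 + m * P2) \<le> card (good H f)"
    proof (rule card_lower[where X = EE and I = "H - {f}" and B = "\<lambda>h. {g \<in> rsubsets n r. 2 \<le> card (g \<inter> h)}"])
      show "rsubsets n r - (EE \<union> (\<Union>h\<in>H - {f}. {g \<in> rsubsets n r. 2 \<le> card (g \<inter> h)})) \<subseteq> good H f"
        unfolding good_def by force
      show "card EE \<le> P2" using card_E_le .
      show "\<forall>h\<in>H - {f}. card {g \<in> rsubsets n r. 2 \<le> card (g \<inter> h)} \<le> P2" using blocked_g HP by auto
      show "card (H - {f}) \<le> m" using HP by (metis card_Diff1_le)
    qed (use fgood HP finite_E finite_rsubsets in auto)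
    then have "real (n choose r) - real (P2 + m * P2) \<le> real (card (good H f))"
      using card_rsubsets[of n r] nat_diff_real by metis
    then show ?thesis unfolding DD_def by (simp add: algebra_simps)
  qed
  have finT: "\<forall>H\<in>LL. finite (Sigma (H \<inter> EE) (good H))" using finite_E fgood by auto
  have "real (card T) = (\<Sum>H\<in>LL. real (card (Sigma (H \<inter> EE) (good H))))"
    unfolding T_def using finite_LL finT by (simp add: card_SigmaI)
  also have "\<dots> = (\<Sum>H\<in>LL. \<Sum>f\<in>H \<inter> EE. real (card (good H f)))"
    using finite_E fgood by (intro sum.cong refl) (simp add: card_SigmaI)
  finally have cT: "real (card T) = (\<Sum>H\<in>LL. \<Sum>f\<in>H \<inter> EE. real (card (good H f)))" .
  have "(\<Sum>H\<in>LL. if H \<inter> EE \<noteq> {} then DD else 0) \<le> (\<Sum>H\<in>LL. \<Sum>f\<in>H \<inter> EE. real (card (good H f)))"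
  proof (rule sum_mono)
    fix H assume H: "H \<in> LL"
    show "(if H \<inter> EE \<noteq> {} then DD else 0) \<le> (\<Sum>f\<in>H \<inter> EE. real (card (good H f)))"
    proof (cases "H \<inter> EE = {}")
      case False
      have "(\<Sum>f\<in>H \<inter> EE. DD) \<le> (\<Sum>f\<in>H \<inter> EE. real (card (good H f)))"
        using goodcard H by (intro sum_mono) auto
      moreover have "DD \<le> (\<Sum>f\<in>H \<inter> EE. DD)"
      proof -
        have "card (H \<inter> EE) \<ge> 1" using False finite_E by (simp add: Suc_le_eq card_gt_0_iff)
        then show ?thesis using DD0 by (simp add: mult_le_cancel_right1)
      qed
      ultimately show ?thesis using False by simp
    qed (simp add: sum_nonneg)
  qed
  moreover have "(\<Sum>H\<in>LL. if H \<inter> EE \<noteq> {} then DD else 0) = real (card {H \<in> LL. H \<inter> EE \<noteq> {}}) * DD"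
    using sum.inter_filter[OF finite_LL, of "\<lambda>_. DD" "\<lambda>H. H \<inter> EE \<noteq> {}"] by simp
  ultimately have low: "real (card {H \<in> LL. H \<inter> EE \<noteq> {}}) * DD \<le> real (card T)" using cT by simp
  define T' where "T' = Sigma LL (\<lambda>H'. (H' - F) \<times> EE)"
  have finH: "\<forall>H\<in>LL. finite H" by (auto dest!: Lin_props)
  have finT': "finite T'" unfolding T'_def using finite_LL finite_E finH by (intro finite_SigmaI) auto
  have Tp: "g \<notin> H \<and> f \<in> H \<and> f \<noteq> g \<and> (insert g (H - {f}), g, f) \<in> T'" if a: "(H, f, g) \<in> T" for H f g
  proof -
    have H: "H \<in> LL" and f: "f \<in> H" "f \<in> EE" and g: "g \<in> rsubsets n r" "g \<notin> EE"
      and gh: "\<forall>h\<in>H-{f}. card (g \<inter> h) \<le> 1"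
      using a unfolding T_def good_def by auto
    have sw1: "insert g (H - {f}) \<in> Lin r n m" "g \<notin> H - {f}"
      using swap_Lin[of H r n m f g] H f g gh r2 by auto
    have fg: "f \<noteq> g" using f g by auto
    then have gH: "g \<notin> H" using sw1 by auto
    have fF: "f \<notin> F" using F_E f by auto
    have "e \<noteq> g" using e_in_E g by auto
    then have "insert g (H - {f}) \<in> LL" using sw1 H fF by auto
    moreover have "g \<notin> F" using gH H by auto
    ultimately have "(insert g (H - {f}), g, f) \<in> T'" unfolding T'_def using f by auto
    then show ?thesis using gH f fg by auto
  qed
  have "card T \<le> card T'"
  proof (rule card_inj_on_le[OF _ _ finT', where f = "\<lambda>(H, f, g). (insert g (H - {f}), g, f)"])
    show "inj_on (\<lambda>(H, f, g). (insert g (H - {f}), g, f)) T"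
    proof (rule inj_onI)
      fix x y assume a0: "x \<in> T" "y \<in> T"
        "(\<lambda>(H, f, g). (insert g (H - {f}), g, f)) x = (\<lambda>(H, f, g). (insert g (H - {f}), g, f)) y"
      obtain H f g where x: "x = (H, f, g)" by (cases x) auto
      obtain H2 f2 g2 where y: "y = (H2, f2, g2)" by (cases y) auto
      have a: "(H, f, g) \<in> T" "(H2, f, g) \<in> T" "insert g (H - {f}) = insert g (H2 - {f})"
        using a0 x y by auto
      have "H = insert f (insert g (H - {f}) - {g})" using Tp[OF a(1)] by blast
      moreover have "H2 = insert f (insert g (H2 - {f}) - {g})" using Tp[OF a(2)] by blast
      ultimately show "x = y" using a(3) x y a0 by simp
    qed
    show "(\<lambda>(H, f, g). (insert g (H - {f}), g, f)) ` T \<subseteq> T'" using Tp by auto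
  qed
  moreover have "card T' = card LL * (m - card F) * card EE"
  proof -
    have "card T' = (\<Sum>H\<in>LL. card ((H - F) \<times> EE))"
      unfolding T'_def using finite_LL finite_E finH by (subst card_SigmaI) auto
    also have "\<dots> = (\<Sum>H\<in>LL. (m - card F) * card EE)"
      by (intro sum.cong refl) (simp add: card_cartesian_product card_HF)
    finally show ?thesis by simp
  qed
  ultimately have "card T \<le> card LL * (m - card F) * card EE" by simp
  then have "real (card T) \<le> real (card LL * (m - card F) * card EE)" by (simp only: of_nat_le_iff)
  then have "real (card T) \<le> real (card LL) * real (m - card F) * real (card EE)" by simp
  with low show ?thesis unfolding DD_def by linarith
qed

end

context sw begin

abbreviation "WW \<equiv> (2*r)^3 * ((n - 3) choose (r - 3))"

lemma switch_lower:
  "real (card {H \<in> LL. H \<inter> EE = {}}) * real (m - card F) * (real (card EE) - 1 - real m * real WW)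
   \<le> real (card {H \<in> LL. card (H \<inter> EE) = 1}) * real (n choose r)"
proof -
  define K where "K = real (card EE) - 1 - real m * real WW"
  define A0 where "A0 = {H \<in> LL. H \<inter> EE = {}}"
  define A1 where "A1 = {H \<in> LL. card (H \<inter> EE) = 1}"
  define goodf where "goodf H g = {f \<in> EE. f \<noteq> e \<and> (\<forall>h\<in>H-{g}. card (f \<inter> h) \<le> 1)}" for H g
  have finH: "\<forall>H\<in>LL. finite H" by (auto dest!: Lin_props)
  have fA0: "finite A0" unfolding A0_def by (rule finite_subset[OF _ finite_LL]) auto
  have fA1: "finite A1" unfolding A1_def by (rule finite_subset[OF _ finite_LL]) auto
  have fgood: "finite (goodf H g)" for H g unfolding goodf_def using finite_E by simp
  have goodcard: "K \<le> real (card (goodf H g))" if H: "H \<in> A0" and g: "g \<in> H" for H g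
  proof -
    have HP: "H \<subseteq> rsubsets n r" "finite H" "card H = m" using Lin_props[of H r n m] H unfolding A0_def by auto
    have HE: "H \<inter> EE = {}" using H unfolding A0_def by auto
    have "card EE - (1 + m * WW) \<le> card (goodf H g)"
    proof (rule card_lower[where X = "{e}" and I = "H - {g}" and B = "\<lambda>h. {f \<in> EE. 2 \<le> card (f \<inter> h)}"])
      show "EE - ({e} \<union> (\<Union>h\<in>H - {g}. {f \<in> EE. 2 \<le> card (f \<inter> h)})) \<subseteq> goodf H g"
        unfolding goodf_def by force
      show "\<forall>h\<in>H - {g}. card {f \<in> EE. 2 \<le> card (f \<inter> h)} \<le> WW"
      proof
        fix h assume h: "h \<in> H - {g}"
        then have hr: "h \<in> rsubsets n r" using HP by auto
        have "h \<notin> EE" using h HE by auto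
        then have "card (h \<inter> e) \<le> 1" using hr unfolding Estar_def by auto
        then show "card {f \<in> EE. 2 \<le> card (f \<inter> h)} \<le> WW" using blocked_f hr by auto
      qed
      show "card (H - {g}) \<le> m" using HP by (metis card_Diff1_le)
    qed (use fgood HP finite_E in auto)
    then have "real (card EE) - real (1 + m * WW) \<le> real (card (goodf H g))"
      using nat_diff_real by metis
    then show ?thesis unfolding K_def by (simp add: algebra_simps)
  qed
  define T2 where "T2 = Sigma A0 (\<lambda>H. Sigma (H - F) (goodf H))"
  have "real (card T2) = (\<Sum>H\<in>A0. real (card (Sigma (H - F) (goodf H))))"
    unfolding T2_def using fA0 fgood finH unfolding A0_def by (simp add: card_SigmaI)
  also have "\<dots> = (\<Sum>H\<in>A0. \<Sum>g\<in>H - F. real (card (goodf H g)))"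
    using fgood finH unfolding A0_def by (intro sum.cong refl) (simp add: card_SigmaI)
  also have "\<dots> \<ge> (\<Sum>H\<in>A0. \<Sum>g\<in>H - F. K)"
    using goodcard by (intro sum_mono) auto
  finally have "(\<Sum>H\<in>A0. \<Sum>g\<in>H - F. K) \<le> real (card T2)" .
  moreover have "(\<Sum>H\<in>A0. \<Sum>g\<in>H - F. K) = real (card A0) * real (m - card F) * K"
  proof -
    have "(\<Sum>H\<in>A0. \<Sum>g\<in>H - F. K) = (\<Sum>H\<in>A0. real (m - card F) * K)"
      by (intro sum.cong refl) (simp add: card_HF A0_def)
    then show ?thesis by simp
  qed
  ultimately have low: "real (card A0) * real (m - card F) * K \<le> real (card T2)" by simp
  define T1 where "T1 = Sigma A1 (\<lambda>H. (H \<inter> EE) \<times> rsubsets n r)"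
  have finT1: "finite T1" unfolding T1_def using fA1 finite_E finite_rsubsets by (intro finite_SigmaI) auto
  have Tp: "f \<notin> H \<and> g \<in> H \<and> f \<noteq> g \<and> (insert f (H - {g}), f, g) \<in> T1" if a: "(H, g, f) \<in> T2" for H g f
  proof -
    have H: "H \<in> LL" "H \<inter> EE = {}" and g: "g \<in> H" "g \<notin> F" and f: "f \<in> EE" "f \<noteq> e"
      and fh: "\<forall>h\<in>H-{g}. card (f \<inter> h) \<le> 1"
      using a unfolding T2_def A0_def goodf_def by auto
    have fr: "f \<in> rsubsets n r" using f E_sub by auto
    have fh': "\<forall>h\<in>H-{g}. card (f \<inter> h) \<le> 1" using fh by simp
    have sw1: "insert f (H - {g}) \<in> Lin r n m" "f \<notin> H - {g}"
      using swap_Lin[of H r n m g f] H g fr fh' r2 by auto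
    have fH: "f \<notin> H" using H f by auto
    have fg: "f \<noteq> g" using fH g by auto
    have gr: "g \<in> rsubsets n r" using g H Lin_props[of H r n m] by auto
    have "F \<subseteq> insert f (H - {g})" using H g by auto
    moreover have "e \<notin> insert f (H - {g})" using H f by auto
    ultimately have "insert f (H - {g}) \<in> LL" using sw1 by auto
    moreover have "insert f (H - {g}) \<inter> EE = {f}" using H f by auto
    ultimately have "(insert f (H - {g}), f, g) \<in> T1" unfolding T1_def A1_def using gr by auto
    then show ?thesis using fH g fg by auto
  qed
  have "card T2 \<le> card T1"
  proof (rule card_inj_on_le[OF _ _ finT1, where f = "\<lambda>(H, g, f). (insert f (H - {g}), f, g)"])
    show "inj_on (\<lambda>(H, g, f). (insert f (H - {g}), f, g)) T2"
    proof (rule inj_onI)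
      fix x y assume a0: "x \<in> T2" "y \<in> T2"
        "(\<lambda>(H, g, f). (insert f (H - {g}), f, g)) x = (\<lambda>(H, g, f). (insert f (H - {g}), f, g)) y"
      obtain H g f where x: "x = (H, g, f)" by (cases x) auto
      obtain H2 g2 f2 where y: "y = (H2, g2, f2)" by (cases y) auto
      have a: "(H, g, f) \<in> T2" "(H2, g, f) \<in> T2" "insert f (H - {g}) = insert f (H2 - {g})"
        using a0 x y by auto
      have "H = insert g (insert f (H - {g}) - {f})" using Tp[OF a(1)] by blast
      moreover have "H2 = insert g (insert f (H2 - {g}) - {f})" using Tp[OF a(2)] by blast
      ultimately show "x = y" using a(3) x y a0 by simp
    qed
    show "(\<lambda>(H, g, f). (insert f (H - {g}), f, g)) ` T2 \<subseteq> T1" using Tp by auto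
  qed
  moreover have "card T1 = card A1 * (n choose r)"
  proof -
    have "card T1 = (\<Sum>H\<in>A1. card ((H \<inter> EE) \<times> rsubsets n r))"
      unfolding T1_def using fA1 finite_E finite_rsubsets by (subst card_SigmaI) auto
    also have "\<dots> = (\<Sum>H\<in>A1. n choose r)"
      by (intro sum.cong refl) (simp add: card_cartesian_product card_rsubsets A1_def)
    finally show ?thesis by simp
  qed
  ultimately have "card T2 \<le> card A1 * (n choose r)" by simp
  then have "real (card T2) \<le> real (card A1 * (n choose r))" by (simp only: of_nat_le_iff)
  then have "real (card T2) \<le> real (card A1) * real (n choose r)" by simp
  with low show ?thesis unfolding K_def A0_def A1_def by linarith
qed

end

lemma numeric:
  fixes m M qq mm e pp w iN p u v :: real
  assumes mm: "0 \<le> mm" "mm \<le> e" "e \<le> mm + pp" "e \<le> qq"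
    and pos: "0 \<le> pp" "0 \<le> w" "0 \<le> iN" "1 \<le> m" "0 \<le> M" "M \<le> m" "0 \<le> v" "0 \<le> u"
    and b: "m * qq \<le> 4 * u" "u \<le> 1/16" "u^2 \<le> m^2 * v" "pp \<le> 27 * v" "w \<le> 216 * v" "iN \<le> 27 * v"
    and pu: "0 < 1 - (m+1) * qq \<Longrightarrow> p \<le> M * e / (1 - (m+1) * qq)"
    and pl: "0 < 1 - (m+1) * qq \<Longrightarrow> M * e / (1 - (m+1) * qq) \<le> 1 \<Longrightarrow>
       M * (e - iN - m * w) * (1 - M * e / (1 - (m+1) * qq)) \<le> p"
  shows "\<bar>p - M * mm\<bar> \<le> 400 * (m^2 * v)"
proof -
  define d where "d = 1 - (m+1) * qq"
  define \<rho> where "\<rho> = M * e / d"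
  define \<sigma> where "\<sigma> = M * (e - iN - m * w)"
  have qq0: "0 \<le> qq" using mm by linarith
  have mv0: "0 \<le> m^2 * v" using pos by simp
  have e0: "0 \<le> e" using mm by linarith
  have mq: "m * qq \<le> 1/4" using b by linarith
  have m1q: "(m+1) * qq \<le> 2 * (m * qq)" 
  proof -
    have "qq * 1 \<le> qq * m" using qq0 pos by (intro mult_left_mono) auto
    then show ?thesis by (simp add: algebra_simps)
  qed
  have d2: "1/2 \<le> d" unfolding d_def using m1q mq by linarith
  have d1: "d \<le> 1" unfolding d_def using pos qq0 by simp
  have dpos: "0 < d" using d2 by linarith
  have Me0: "0 \<le> M * e" using pos e0 by simp
  have rho0: "0 \<le> \<rho>" unfolding \<rho>_def using Me0 dpos by simp
  have "\<rho> \<le> 2 * (M * e)"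
  proof -
    have "M*e*1 \<le> M*e*(2*d)" using Me0 d2 by (intro mult_left_mono) auto
    then show ?thesis unfolding \<rho>_def using dpos by (simp add: divide_le_eq algebra_simps)
  qed
  also have "\<dots> \<le> 2 * (m * qq)" 
  proof -
    have "M * e \<le> m * qq" using pos e0 mm(4) by (intro mult_mono) auto
    then show ?thesis by linarith
  qed
  finally have rho_le: "\<rho> \<le> 8 * u" using b by linarith
  have rho2: "\<rho>^2 \<le> 64 * (m^2 * v)"
  proof -
    have "\<rho>^2 \<le> (8*u)^2" using rho_le rho0 by (rule power_mono)
    then show ?thesis using b by simp
  qed
  have "e / d - mm \<le> (mm + pp) / d - mm" using mm dpos by (simp add: divide_right_mono)
  also have "\<dots> = mm * ((1 - d) / d) + pp / d" using dpos by (simp add: field_simps)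
  also have "\<dots> \<le> mm * (2 * ((m+1) * qq)) + 2 * pp"
  proof -
    have "0 \<le> m + 1" using pos by linarith
    then have x0: "0 \<le> (m+1) * qq" using mult_nonneg_nonneg[OF _ qq0] by simp
    have "(m+1)*qq*1 \<le> (m+1)*qq*(2*d)" using x0 d2 by (intro mult_left_mono) auto
    then have "(1 - d) \<le> 2 * ((m+1) * qq) * d" unfolding d_def by (simp add: algebra_simps)
    then have "(1 - d) / d \<le> 2 * ((m+1) * qq)" using dpos by (simp add: divide_le_eq)
    moreover have "pp / d \<le> 2 * pp"
    proof -
      have "pp*1 \<le> pp*(2*d)" using pos d2 by (intro mult_left_mono) auto
      then show ?thesis using dpos by (simp add: divide_le_eq algebra_simps)
    qed
    ultimately have "mm * ((1 - d) / d) \<le> mm * (2 * ((m+1) * qq))" using mm(1) by (intro mult_left_mono) auto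
    with \<open>pp / d \<le> 2 * pp\<close> show ?thesis by linarith
  qed
  also have "\<dots> \<le> qq * (4 * (m * qq)) + 2 * pp"
  proof -
    have "0 \<le> m + 1" using pos by linarith
    then have x0: "0 \<le> 2 * ((m+1) * qq)" using mult_nonneg_nonneg[OF _ qq0] by simp
    have "2 * ((m+1) * qq) \<le> 4 * (m * qq)" using m1q by linarith
    moreover have "mm \<le> qq" using mm by linarith
    ultimately have "mm * (2 * ((m+1) * qq)) \<le> qq * (4 * (m * qq))"
      using mult_mono[of mm qq "2 * ((m+1) * qq)" "4 * (m * qq)"] qq0 x0 by blast
    then show ?thesis by linarith
  qed
  finally have ed: "e / d - mm \<le> qq * (4 * (m * qq)) + 2 * pp" .
  have "\<rho> - M * mm = M * (e / d - mm)" unfolding \<rho>_def by (simp add: algebra_simps)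
  also have "\<dots> \<le> m * (qq * (4 * (m * qq)) + 2 * pp)"
  proof -
    have "e * d \<le> e * 1" using e0 d1 by (intro mult_left_mono) auto
    then have "e \<le> e / d" using dpos by (simp add: le_divide_eq)
    then have "e / d - mm \<ge> 0" using mm by linarith
    then show ?thesis using ed pos by (intro mult_mono) auto
  qed
  also have "\<dots> = 4 * (m * qq)^2 + 2 * m * pp" by (simp add: algebra_simps power2_eq_square)
  also have "\<dots> \<le> 4 * (16 * u^2) + 2 * m * (27 * v)"
  proof -
    have "(m * qq)^2 \<le> (4*u)^2" using b pos qq0 by (intro power_mono) auto
    moreover have "m * pp \<le> m * (27 * v)" using b pos by (intro mult_left_mono) auto
    ultimately show ?thesis by (simp add: power_mult_distrib)
  qed
  also have "\<dots> \<le> 400 * (m^2 * v)"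
  proof -
    have "m * v \<le> m^2 * v" using pos by (simp add: power2_eq_square mult_right_mono)
    moreover have "2 * m * (27 * v) = 54 * (m * v)" by simp
    ultimately show ?thesis using b mv0 by linarith
  qed
  finally have up: "\<rho> - M * mm \<le> 400 * (m^2 * v)" .
  have sig_rho: "\<sigma> \<le> \<rho>"
  proof -
    have "0 \<le> m * w" using pos by simp
    then have "e - iN - m * w \<le> e" using pos by linarith
    then have "\<sigma> \<le> M * e" unfolding \<sigma>_def using pos by (intro mult_left_mono) auto
    also have "M * e \<le> \<rho>"
    proof -
      have "M * e * d \<le> M * e * 1" using Me0 d1 by (intro mult_left_mono) auto
      then show ?thesis unfolding \<rho>_def using dpos by (simp add: le_divide_eq)
    qed
    finally show ?thesis .
  qed
  have "\<sigma> * \<rho> \<le> \<rho> * \<rho>" using sig_rho rho0 by (rule mult_right_mono)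
  then have srho: "\<sigma> * \<rho> \<le> 64 * (m^2 * v)" using rho2 by (simp add: power2_eq_square)
  have "M * mm - \<sigma> = M * (mm - e + iN + m * w)" unfolding \<sigma>_def by (simp add: algebra_simps)
  also have "\<dots> \<le> m * (iN + m * w)"
  proof -
    have mw: "0 \<le> m * w" using pos by simp
    have "M * (mm - e + iN + m * w) \<le> M * (iN + m * w)" using pos mm by (intro mult_left_mono) auto
    also have "\<dots> \<le> m * (iN + m * w)" using pos mw by (intro mult_right_mono) auto
    finally show ?thesis .
  qed
  also have "\<dots> \<le> m * (27 * v + m * (216 * v))"
    using pos b by (intro mult_left_mono add_mono) auto
  also have "\<dots> = 27 * (m * v) + 216 * (m^2 * v)" by (simp add: algebra_simps power2_eq_square)
  also have "\<dots> \<le> 243 * (m^2 * v)"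
  proof -
    have "m * v \<le> m^2 * v" using pos by (simp add: power2_eq_square mult_right_mono)
    then show ?thesis using mv0 by linarith
  qed
  finally have lo1: "M * mm - \<sigma> \<le> 243 * (m^2 * v)" .
  have "\<rho> \<le> 1" using rho_le b by linarith
  then have "M * mm - p \<le> M * mm - \<sigma> * (1 - \<rho>)" using pl dpos unfolding \<sigma>_def \<rho>_def d_def by linarith
  also have "\<dots> = (M * mm - \<sigma>) + \<sigma> * \<rho>" by (simp add: algebra_simps)
  finally have lo: "M * mm - p \<le> 400 * (m^2 * v)" using lo1 srho mv0 by linarith
  have "p - M * mm \<le> 400 * (m^2 * v)" using up pu dpos unfolding \<rho>_def d_def by linarith
  with lo show ?thesis by linarith
qed


context sw begin

lemma prob_bounds:
  assumes ne: "LL \<noteq> {}"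
  defines "S \<equiv> real (card {H \<in> LL. H \<inter> EE \<noteq> {}})" and "l \<equiv> real (card LL)"
    and "M \<equiv> real (m - card F)" and "E \<equiv> real (card EE)" and "N \<equiv> real (n choose r)"
    and "D \<equiv> real (n choose r) - real (m+1) * real P2"
  shows "0 < D \<Longrightarrow> S / l \<le> M * E / D"
    and "0 < D \<Longrightarrow> M * E / D \<le> 1 \<Longrightarrow> M * (E - 1 - real m * real WW) / N * (1 - M * E / D) \<le> S / l"
proof -
  have l0: "0 < l" unfolding l_def using ne finite_LL by (simp add: card_gt_0_iff)
  have P0: "0 \<le> real (m+1) * real P2" by simp
  have up: "0 < D \<Longrightarrow> S * D \<le> l * M * E"
    using switch_upper unfolding S_def D_def l_def M_def E_def by simp
  show up2: "0 < D \<Longrightarrow> S / l \<le> M * E / D"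
  proof -
    assume D: "0 < D"
    then have "S * D \<le> l * (M * E)" using up by (simp add: mult.assoc)
    then show ?thesis using D l0 by (simp add: divide_le_eq le_divide_eq mult.commute mult.left_commute)
  qed
  assume D: "0 < D" and rho1: "M * E / D \<le> 1"
  define \<rho> where "\<rho> = M * E / D"
  define a0 where "a0 = real (card {H \<in> LL. H \<inter> EE = {}})"
  define a1 where "a1 = real (card {H \<in> LL. card (H \<inter> EE) = 1})"
  have N0: "0 < N" using D P0 unfolding D_def N_def by linarith
  have lsum: "l = S + a0"
  proof -
    have "card LL = card {H \<in> LL. H \<inter> EE \<noteq> {}} + card {H \<in> LL. H \<inter> EE = {}}"
    proof -
      have f1: "finite {H \<in> LL. H \<inter> EE \<noteq> {}}" by (rule finite_subset[OF _ finite_LL]) auto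
      have f2: "finite {H \<in> LL. H \<inter> EE = {}}" by (rule finite_subset[OF _ finite_LL]) auto
      have "LL = {H \<in> LL. H \<inter> EE \<noteq> {}} \<union> {H \<in> LL. H \<inter> EE = {}}" by auto
      then have "card LL = card ({H \<in> LL. H \<inter> EE \<noteq> {}} \<union> {H \<in> LL. H \<inter> EE = {}})" by (rule arg_cong[where f = card])
      also have "\<dots> = card {H \<in> LL. H \<inter> EE \<noteq> {}} + card {H \<in> LL. H \<inter> EE = {}}"
        by (rule card_Un_disjoint[OF f1 f2]) auto
      finally show ?thesis .
    qed
    then show ?thesis unfolding l_def S_def a0_def by simp
  qed
  have a1S: "a1 \<le> S"
  proof -
    have "{H \<in> LL. card (H \<inter> EE) = 1} \<subseteq> {H \<in> LL. H \<inter> EE \<noteq> {}}" by auto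
    moreover have "finite {H \<in> LL. H \<inter> EE \<noteq> {}}" by (rule finite_subset[OF _ finite_LL]) auto
    ultimately show ?thesis unfolding a1_def S_def
      by (intro of_nat_mono card_mono) auto
  qed
  have Sr: "S \<le> \<rho> * l" using up2[OF D] l0 unfolding \<rho>_def by (simp add: divide_le_eq)
  have a0l: "l * (1 - \<rho>) \<le> a0" using lsum Sr by (simp add: algebra_simps)
  have low: "a0 * M * (E - 1 - real m * real WW) \<le> a1 * N"
    using switch_lower unfolding a0_def M_def E_def a1_def N_def by simp
  define \<sigma> where "\<sigma> = M * (E - 1 - real m * real WW) / N"
  have sa: "a0 * \<sigma> \<le> a1" using low N0 unfolding \<sigma>_def by (simp add: divide_le_eq mult.assoc)
  show "M * (E - 1 - real m * real WW) / N * (1 - M * E / D) \<le> S / l"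
  proof (cases "\<sigma> \<ge> 0")
    case True
    have "\<sigma> * (l * (1 - \<rho>)) \<le> \<sigma> * a0" using a0l True by (rule mult_left_mono)
    also have "\<dots> \<le> S" using sa a1S by (simp add: mult.commute)
    finally have "\<sigma> * (1 - \<rho>) * l \<le> S" by (simp add: mult.commute mult.left_commute)
    then have "\<sigma> * (1 - \<rho>) \<le> S / l" using l0 by (simp add: le_divide_eq)
    then show ?thesis unfolding \<sigma>_def \<rho>_def .
  next
    case False
    have "0 \<le> 1 - \<rho>" using rho1 unfolding \<rho>_def by simp
    then have "\<sigma> * (1 - \<rho>) \<le> 0" using False by (simp add: mult_nonpos_nonneg)
    moreover have "0 \<le> S / l" unfolding S_def l_def by simp
    ultimately show ?thesis unfolding \<sigma>_def \<rho>_def by linarith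
  qed
qed

end

context sw begin

lemma E_bounds:
  "(r choose 2) * ((n - r) choose (r - 2)) \<le> card EE"
  "card EE \<le> (r choose 2) * ((n - r) choose (r - 2)) + (r choose 3) * ((n - 3) choose (r - 3))"
proof -
  have fe: "finite e" "card e = r" using rs_props[OF e] by auto
  have s1: "{f \<in> rsubsets n r. card (f \<inter> e) = 2} \<subseteq> EE" unfolding Estar_def by auto
  show "(r choose 2) * ((n - r) choose (r - 2)) \<le> card EE"
    using card_mono[OF finite_E s1] exact2[OF e r2] by simp
  have s2: "EE \<subseteq> {f \<in> rsubsets n r. card (f \<inter> e) = 2} \<union> {f \<in> rsubsets n r. 3 \<le> card (f \<inter> e)}"
    unfolding Estar_def by auto
  have "card EE \<le> card ({f \<in> rsubsets n r. card (f \<inter> e) = 2} \<union> {f \<in> rsubsets n r. 3 \<le> card (f \<inter> e)})"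
    by (rule card_mono[OF _ s2]) (simp add: finite_rsubsets)
  also have "\<dots> \<le> card {f \<in> rsubsets n r. card (f \<inter> e) = 2} + card {f \<in> rsubsets n r. 3 \<le> card (f \<inter> e)}"
    by (rule card_Un_le)
  also have "\<dots> \<le> (r choose 2) * ((n - r) choose (r - 2)) + (r choose 3) * ((n - 3) choose (r - 3))"
    using exact2[OF e r2] count_ge[OF fe(1), of n r 3] fe(2) by simp
  finally show "card EE \<le> (r choose 2) * ((n - r) choose (r - 2)) + (r choose 3) * ((n - 3) choose (r - 3))" .
qed

end

lemma choose_pos: "k \<le> n \<Longrightarrow> 0 < n choose k" by simp

lemma bin_q:
  assumes "3 \<le> r" "r \<le> n"
  shows "real ((r choose 2) * ((n - 2) choose (r - 2))) / real (n choose r) \<le> 4 * real r ^ 4 / real n ^ 2"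
proof -
  define c where "c = real (r choose 2)"
  define d where "d = real ((n - 2) choose (r - 2))"
  define N where "N = real (n choose r)"
  define a where "a = real (n choose 2)"
  have "(n choose r) * (r choose 2) = (n choose 2) * ((n - 2) choose (r - 2))"
    by (rule choose_mult) (use assms in auto)
  then have "real ((n choose r) * (r choose 2)) = real ((n choose 2) * ((n - 2) choose (r - 2)))"
    by (rule arg_cong)
  then have id: "N * c = a * d" unfolding N_def c_def a_def d_def by (simp only: of_nat_mult)
  have N0: "0 < N" unfolding N_def using assms by simp
  have "(real n / real 2) ^ 2 \<le> a" unfolding a_def
    using binomial_ge_n_over_k_pow_k[of 2 n, where 'a = real] assms by linarith
  moreover have "(real n / real 2) ^ 2 = real n ^ 2 / 4" by (simp add: power_divide)
  ultimately have aa: "real n ^ 2 / 4 \<le> a" by simp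
  have a0: "0 < real n ^ 2 / 4" using assms by simp
  have apos: "0 < a" using aa a0 by linarith
  have eq: "c * d / N = c ^ 2 / a"
  proof -
    have "c * d * a = c * (a * d)" by (simp only: mult_ac)
    also have "\<dots> = c * (N * c)" using id by simp
    also have "\<dots> = c ^ 2 * N" by (simp only: power2_eq_square mult_ac)
    finally have "c * d * a = c ^ 2 * N" .
    then show ?thesis using N0 apos by (simp add: frac_eq_eq)
  qed
  have "c ^ 2 / a \<le> (real r ^ 2) ^ 2 / (real n ^ 2 / 4)"
  proof (rule frac_le)
    have "real (r choose 2) \<le> real (r ^ 2)" by (rule of_nat_mono[OF choose_le_pow])
    then have "c \<le> real r ^ 2" unfolding c_def by simp
    moreover have "0 \<le> c" unfolding c_def by simp
    ultimately show "c ^ 2 \<le> (real r ^ 2) ^ 2" by (intro power_mono) auto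
  qed (use aa a0 in auto)
  also have "(real r ^ 2) ^ 2 / (real n ^ 2 / 4) = 4 * real r ^ 4 / real n ^ 2"
  proof -
    have "(real r ^ 2) ^ 2 = real r ^ 4" by (simp only: power_mult[symmetric]) simp
    then show ?thesis by simp
  qed
  finally show ?thesis using eq unfolding c_def d_def N_def by simp
qed

lemma bin3:
  assumes "3 \<le> r" "r \<le> n"
  shows "real ((n - 3) choose (r - 3)) / real (n choose r) \<le> 27 * real r ^ 3 / real n ^ 3"
    and "1 / real (n choose r) \<le> 27 * real r ^ 3 / real n ^ 3"
proof -
  have "(n choose r) * (r choose 3) = (n choose 3) * ((n - 3) choose (r - 3))"
    by (rule choose_mult) (use assms in auto)
  then have "real ((n choose r) * (r choose 3)) = real ((n choose 3) * ((n - 3) choose (r - 3)))"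
    by (rule arg_cong)
  then have id: "real (n choose r) * real (r choose 3) = real (n choose 3) * real ((n - 3) choose (r - 3))"
    by (simp only: of_nat_mult)
  have N0: "0 < real (n choose r)" using assms by simp
  have a: "real n ^ 3 / 27 \<le> real (n choose 3)"
    using binomial_ge_n_over_k_pow_k[of 3 n, where 'a = real] assms by (simp add: power_divide)
  have a0: "0 < real n ^ 3 / 27" using assms by simp
  have "real (r choose 3) \<le> real (r ^ 3)" by (rule of_nat_mono[OF choose_le_pow])
  then have c3: "real (r choose 3) \<le> real r ^ 3" by simp
  have q: "real ((n - 3) choose (r - 3)) / real (n choose r) = real (r choose 3) / real (n choose 3)"
  proof -
    have "0 < real (n choose 3)" using a a0 by linarith
    then show ?thesis using N0 id by (simp add: field_simps)
  qed
  have b: "real (r choose 3) / real (n choose 3) \<le> real r ^ 3 / (real n ^ 3 / 27)"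
    by (rule frac_le) (use a a0 c3 in auto)
  also have "\<dots> = 27 * real r ^ 3 / real n ^ 3" by simp
  finally have b': "real (r choose 3) / real (n choose 3) \<le> 27 * real r ^ 3 / real n ^ 3" .
  then show "real ((n - 3) choose (r - 3)) / real (n choose r) \<le> 27 * real r ^ 3 / real n ^ 3" using q by simp
  have "1 \<le> real ((n - 3) choose (r - 3))" using assms by (simp add: Suc_le_eq)
  then have "1 / real (n choose r) \<le> real ((n - 3) choose (r - 3)) / real (n choose r)"
    using N0 by (simp add: divide_right_mono)
  also have "\<dots> \<le> 27 * real r ^ 3 / real n ^ 3" using q b' by simp
  finally show "1 / real (n choose r) \<le> 27 * real r ^ 3 / real n ^ 3" .
qed


lemma set_take_nth: "t \<le> length xs \<Longrightarrow> set (take t xs) = {xs ! j | j. j < t}"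
proof (intro set_eqI iffI)
  fix x assume t: "t \<le> length xs" and "x \<in> set (take t xs)"
  then obtain j where "j < length (take t xs)" "take t xs ! j = x" by (auto simp: in_set_conv_nth)
  then show "x \<in> {xs ! j | j. j < t}" using t by auto
next
  fix x assume t: "t \<le> length xs" and "x \<in> {xs ! j | j. j < t}"
  then obtain j where j: "j < t" "x = xs ! j" by auto
  then have "take t xs ! j = x" by simp
  moreover have "j < length (take t xs)" using j t by simp
  ultimately show "x \<in> set (take t xs)" by (metis nth_mem)
qed

lemma fixed_n:
  fixes n r m k i :: nat and es :: "nat set list"
  assumes r3: "3 \<le> r" and km: "1 \<le> k" "k \<le> m"
    and hyp: "real m ^ 2 * real r ^ 6 \<le> real n ^ 3 / 256"
    and es: "length es = k" "distinct es" "linear_rgraph n r (set es)"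
    and i: "1 \<le> i" "i \<le> k" and ne: "Lin_bar r n m es i \<noteq> {}"
  shows "\<bar>prob_hit r n m es i
          - real (m - i + 1) * real (r choose 2) * real ((n - r) choose (r - 2)) / real (n choose r)\<bar>
       \<le> 400 * (real r ^ 6 * real m ^ 2 / real n ^ 3)"
proof -
  have m1: "1 \<le> m" using km by simp
  have rm: "real r ^ 6 \<le> real m ^ 2 * real r ^ 6"
  proof -
    have "1 \<le> real m ^ 2" using m1 by simp
    then show ?thesis by (simp add: mult_le_cancel_right1)
  qed
  have r6: "(real r ^ 2) ^ 3 \<le> real n ^ 3"
  proof -
    have "(real r ^ 2) ^ 3 = real r ^ 6" by (simp only: power_mult[symmetric]) simp
    moreover have "real n ^ 3 / 256 \<le> real n ^ 3" by simp
    ultimately show ?thesis using rm hyp by linarith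
  qed
  have rn2: "real r ^ 2 \<le> real n"
    using power_le_imp_le_base[of "real r ^ 2" 2 "real n"] r6 by (simp add: numeral_3_eq_3)
  have rr2: "real r \<le> real r ^ 2" using r3 by (simp add: power2_eq_square)
  have rn: "r \<le> n" using rr2 rn2 by linarith
  have n0: "0 < real n" using rn r3 by simp
  define e where "e = es ! (i - 1)"
  define F where "F = set (take (i - 1) es)"
  have esub: "set es \<subseteq> rsubsets n r" and lin: "\<forall>x\<in>set es. \<forall>y\<in>set es. x \<noteq> y \<longrightarrow> card (x \<inter> y) \<le> 1"
    using es(3) unfolding linear_rgraph_def by auto
  have ilt: "i - 1 < length es" using i es by simp
  have ee: "e \<in> set es" unfolding e_def using ilt by simp
  have Fset: "F = {es ! j | j. j < i - 1}" unfolding F_def using ilt by (intro set_take_nth) simp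
  have FS: "F \<subseteq> set es" unfolding F_def by (rule set_take_subset)
  have Fe: "\<forall>h\<in>F. card (h \<inter> e) \<le> 1"
  proof
    fix h assume "h \<in> F"
    then obtain j where j: "j < i - 1" "h = es ! j" using Fset by auto
    have "h \<noteq> e" unfolding e_def j(2) using es(2) j(1) ilt by (simp add: nth_eq_iff_index_eq)
    moreover have "h \<in> set es" using j ilt by simp
    ultimately show "card (h \<inter> e) \<le> 1" using lin ee by auto
  qed
  interpret sw n r m e F
    by unfold_locales (use r3 esub ee FS Fe in auto)
  have LB: "Lin_bar r n m es i = LL"
    unfolding Lin_bar_def e_def[symmetric] Fset by auto
  have cardF: "card F = i - 1"
  proof -
    have "distinct (take (i - 1) es)" using es(2) by simp
    then show ?thesis unfolding F_def using ilt by (simp add: distinct_card)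
  qed
  have Meq: "m - card F = m - i + 1" using cardF i km by simp
  have PH: "prob_hit r n m es i = real (card {H \<in> LL. H \<inter> EE \<noteq> {}}) / real (card LL)"
  proof -
    have "{H \<in> LL. \<exists>x\<in>H. x \<in> EE} = {H \<in> LL. H \<inter> EE \<noteq> {}}" by auto
    then show ?thesis unfolding prob_hit_def LB e_def[symmetric] by simp
  qed
  have neLL: "LL \<noteq> {}" using ne LB by simp
  define N where "N = real (n choose r)"
  define P2r where "P2r = real ((r choose 2) * ((n - 2) choose (r - 2)))"
  define M2 where "M2 = real ((r choose 2) * ((n - r) choose (r - 2)))"
  define P3 where "P3 = real ((r choose 3) * ((n - 3) choose (r - 3)))"
  define W where "W = real WW"
  define E where "E = real (card EE)"
  define Mr where "Mr = real (m - card F)"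
  define p where "p = prob_hit r n m es i"
  define u where "u = real m * real r ^ 4 / real n ^ 2"
  define v where "v = real r ^ 6 / real n ^ 3"
  have N0: "0 < N" unfolding N_def using rn by simp
  have v0: "0 \<le> v" unfolding v_def by simp
  have u0: "0 \<le> u" unfolding u_def by simp
  have mv: "real m ^ 2 * v \<le> 1 / 256"
    using hyp n0 unfolding v_def by (simp add: divide_le_eq field_simps)
  have uv: "u ^ 2 \<le> real m ^ 2 * v"
  proof -
    have "u ^ 2 = (real m ^ 2 * v) * (real r ^ 2 / real n)"
      unfolding u_def v_def using n0 by (simp add: field_simps power2_eq_square) (simp add: power_def)
    also have "\<dots> \<le> (real m ^ 2 * v) * 1"
    proof (rule mult_left_mono)
      show "real r ^ 2 / real n \<le> 1" using rn2 n0 by simp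
    qed (use v0 in simp)
    finally show ?thesis by simp
  qed
  have u16: "u \<le> 1/16"
  proof -
    have "u ^ 2 \<le> (1/16) ^ 2" using uv mv by (simp add: power2_eq_square)
    then show ?thesis by (rule power2_le_imp_le) simp
  qed
  have Eb1: "M2 \<le> E" unfolding M2_def E_def using E_bounds(1) by (simp only: of_nat_le_iff)
  have Eb2: "E \<le> M2 + P3" unfolding M2_def E_def P3_def
    using E_bounds(2) by (metis of_nat_add of_nat_le_iff)
  have Eb3: "E \<le> P2r" unfolding P2r_def E_def using card_E_le by (simp only: of_nat_le_iff)
  have bq: "P2r / N \<le> 4 * real r ^ 4 / real n ^ 2" unfolding P2r_def N_def using bin_q[OF r3 rn] .
  have b3a: "real ((n - 3) choose (r - 3)) / N \<le> 27 * real r ^ 3 / real n ^ 3" unfolding N_def using bin3(1)[OF r3 rn] .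
  have b3b: "1 / N \<le> 27 * real r ^ 3 / real n ^ 3" unfolding N_def using bin3(2)[OF r3 rn] .
  have r36: "real r ^ 3 \<le> real r ^ 6" using r3 by (intro power_increasing) auto
  have num: "\<bar>p - Mr * (M2 / N)\<bar> \<le> 400 * (real m ^ 2 * v)"
  proof (rule numeric[where qq = "P2r / N" and e = "E / N" and pp = "P3 / N" and w = "W / N" and iN = "1 / N" and u = u])
    show "0 \<le> M2 / N" unfolding M2_def using N0 by simp
    show "M2 / N \<le> E / N" using Eb1 N0 by (simp add: divide_right_mono)
    show "E / N \<le> M2 / N + P3 / N" using Eb2 N0 by (simp add: divide_right_mono add_divide_distrib[symmetric])
    show "E / N \<le> P2r / N" using Eb3 N0 by (simp add: divide_right_mono)
    show "0 \<le> P3 / N" "0 \<le> W / N" "0 \<le> 1 / N" unfolding P3_def W_def using N0 by simp_all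
    show "1 \<le> real m" using m1 by simp
    show "0 \<le> Mr" "Mr \<le> real m" unfolding Mr_def by simp_all
    show "0 \<le> v" "0 \<le> u" using v0 u0 .
    show "real m * (P2r / N) \<le> 4 * u"
    proof -
      have "real m * (P2r / N) \<le> real m * (4 * real r ^ 4 / real n ^ 2)" using bq by (intro mult_left_mono) auto
      then show ?thesis unfolding u_def by (simp add: ac_simps)
    qed
    show "u \<le> 1/16" by (rule u16)
    show "u ^ 2 \<le> real m ^ 2 * v" by (rule uv)
    show "P3 / N \<le> 27 * v"
    proof -
      have "P3 / N = real (r choose 3) * (real ((n - 3) choose (r - 3)) / N)" unfolding P3_def by simp
      also have "\<dots> \<le> real r ^ 3 * (27 * real r ^ 3 / real n ^ 3)"
      proof (rule mult_mono)
        have "r choose 3 \<le> r ^ 3" by (rule choose_le_pow)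
        then have "real (r choose 3) \<le> real (r ^ 3)" by (simp only: of_nat_le_iff)
        then show "real (r choose 3) \<le> real r ^ 3" by simp
      qed (use b3a N0 in auto)
      also have "\<dots> = 27 * v" unfolding v_def by (simp add: power_add[symmetric])
      finally show ?thesis .
    qed
    show "W / N \<le> 216 * v"
    proof -
      have "W / N = 8 * real r ^ 3 * (real ((n - 3) choose (r - 3)) / N)" unfolding W_def by (simp add: power_mult_distrib)
      also have "\<dots> \<le> 8 * real r ^ 3 * (27 * real r ^ 3 / real n ^ 3)" using b3a by (intro mult_left_mono) auto
      also have "\<dots> = 216 * v" unfolding v_def by (simp add: power_add[symmetric])
      finally show ?thesis .
    qed
    show "1 / N \<le> 27 * v"
    proof -
      have "27 * real r ^ 3 / real n ^ 3 \<le> 27 * real r ^ 6 / real n ^ 3" using r36 n0 by (simp add: divide_right_mono)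
      then show ?thesis using b3b unfolding v_def by simp
    qed
    have NN: "real (n choose r) = N" by (simp add: N_def)
    have PP: "real P2 = P2r" by (simp add: P2r_def)
    have Dx: "1 - (real m + 1) * (P2r / N) = (N - real (m + 1) * P2r) / N"
      using N0 by (simp add: diff_divide_distrib)
    note pb1 = prob_bounds(1)[OF neLL, unfolded NN PP]
    note pb2 = prob_bounds(2)[OF neLL, unfolded NN PP]
    show "0 < 1 - (real m + 1) * (P2r / N) \<Longrightarrow> p \<le> Mr * (E / N) / (1 - (real m + 1) * (P2r / N))"
    proof -
      assume "0 < 1 - (real m + 1) * (P2r / N)"
      then have D0: "0 < N - real (m + 1) * P2r" using Dx N0 by (simp add: zero_less_divide_iff add.commute)
      have rq: "Mr * (E / N) / (1 - (real m + 1) * (P2r / N)) = Mr * E / (N - real (m + 1) * P2r)"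
        unfolding Dx using N0 D0 by (simp add: field_simps)
      have "p \<le> Mr * E / (N - real (m + 1) * P2r)" unfolding p_def PH Mr_def E_def by (rule pb1[OF D0])
      then show ?thesis by (simp only: rq)
    qed
    show "0 < 1 - (real m + 1) * (P2r / N) \<Longrightarrow> Mr * (E / N) / (1 - (real m + 1) * (P2r / N)) \<le> 1 \<Longrightarrow>
       Mr * (E / N - 1 / N - real m * (W / N)) * (1 - Mr * (E / N) / (1 - (real m + 1) * (P2r / N))) \<le> p"
    proof -
      assume a1: "0 < 1 - (real m + 1) * (P2r / N)" and a2: "Mr * (E / N) / (1 - (real m + 1) * (P2r / N)) \<le> 1"
      then have D0: "0 < N - real (m + 1) * P2r" using Dx N0 by (simp add: zero_less_divide_iff add.commute)
      have rq: "Mr * (E / N) / (1 - (real m + 1) * (P2r / N)) = Mr * E / (N - real (m + 1) * P2r)"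
        unfolding Dx using N0 D0 by (simp add: field_simps)
      have sq: "Mr * (E / N - 1 / N - real m * (W / N)) = Mr * (E - 1 - real m * W) / N"
        using N0 by (simp add: field_simps)
      have a2': "Mr * E / (N - real (m + 1) * P2r) \<le> 1" using a2 by (simp only: rq)
      have "Mr * (E - 1 - real m * W) / N * (1 - Mr * E / (N - real (m + 1) * P2r)) \<le> p"
        unfolding p_def PH Mr_def E_def W_def by (rule pb2[OF D0 a2'[unfolded Mr_def E_def]])
      then show ?thesis by (simp only: rq sq)
    qed
  qed
  have "Mr * (M2 / N) = real (m - i + 1) * real (r choose 2) * real ((n - r) choose (r - 2)) / real (n choose r)"
    unfolding Mr_def M2_def N_def Meq by simp
  moreover have "400 * (real m ^ 2 * v) = 400 * (real r ^ 6 * real m ^ 2 / real n ^ 3)" unfolding v_def by simp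
  ultimately show ?thesis using num unfolding p_def by simp
qed


lemma ev_bound:
  fixes r m :: "nat \<Rightarrow> nat"
  assumes r3: "\<And>n. r n \<ge> 3"
    and m_small: "(\<lambda>n. real (m n)) \<in> o(\<lambda>n. real n powr (3/2) / real (r n) ^ 3)"
  shows "\<forall>\<^sub>F n in sequentially. real (m n) ^ 2 * real (r n) ^ 6 \<le> real n ^ 3 / 256"
proof -
  have "\<forall>\<^sub>F n in at_top. norm (real (m n)) \<le> (1/16) * norm (real n powr (3/2) / real (r n) ^ 3)"
    using landau_o.smallD[OF m_small, of "1/16"] by simp
  then show ?thesis
  proof eventually_elim
    case (elim n)
    have r0: "0 < real (r n)" using r3[of n] by simp
    have "real (m n) \<le> (1/16) * (real n powr (3/2) / real (r n) ^ 3)" using elim r0 by simp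
    then have "real (m n) * real (r n) ^ 3 \<le> (1/16) * real n powr (3/2)"
      using r0 by (simp add: le_divide_eq)
    moreover have "0 \<le> real (m n) * real (r n) ^ 3" by simp
    ultimately have "(real (m n) * real (r n) ^ 3) ^ 2 \<le> ((1/16) * real n powr (3/2)) ^ 2"
      by (rule power_mono)
    also have "\<dots> = (1/256) * (real n powr (3/2) * real n powr (3/2))" by (simp add: power2_eq_square)
    also have "real n powr (3/2) * real n powr (3/2) = real n ^ 3" by (simp add: powr_add[symmetric])
    finally show ?case by (simp add: power_mult_distrib power_mult[symmetric])
  qed
qed

theorem lemma10p2:
  fixes r m k :: "nat \<Rightarrow> nat"
  assumes r3: "\<And>n. r n \<ge> 3"
    and km: "\<And>n. 1 \<le> k n \<and> k n \<le> m n"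
    and m_small: "(\<lambda>n. real (m n)) \<in> o(\<lambda>n. real n powr (3/2) / real (r n) ^ 3)"
    and k_small: "(\<lambda>n. real (k n)) \<in> o(\<lambda>n. real n ^ 3 / (real (r n) ^ 6 * real (m n) ^ 2))"
  shows "\<exists>C. \<forall>\<^sub>F n in sequentially.
     \<forall>es i. length es = k n \<and> distinct es \<and> linear_rgraph n (r n) (set es)
       \<and> 1 \<le> i \<and> i \<le> k n \<and> Lin_bar (r n) n (m n) es i \<noteq> {} \<longrightarrow>
       \<bar>prob_hit (r n) n (m n) es i
          - real (m n - i + 1) * real (r n choose 2) * real ((n - r n) choose (r n - 2))
            / real (n choose r n)\<bar>
       \<le> C * (real (r n) ^ 6 * real (m n) ^ 2 / real n ^ 3)"
proof (intro exI[of _ 400])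
  show "\<forall>\<^sub>F n in sequentially.
     \<forall>es i. length es = k n \<and> distinct es \<and> linear_rgraph n (r n) (set es)
       \<and> 1 \<le> i \<and> i \<le> k n \<and> Lin_bar (r n) n (m n) es i \<noteq> {} \<longrightarrow>
       \<bar>prob_hit (r n) n (m n) es i
          - real (m n - i + 1) * real (r n choose 2) * real ((n - r n) choose (r n - 2))
            / real (n choose r n)\<bar>
       \<le> 400 * (real (r n) ^ 6 * real (m n) ^ 2 / real n ^ 3)"
    using ev_bound[OF r3 m_small]
  proof eventually_elim
    case (elim n)
    show ?case
    proof (intro allI impI)
      fix es i
      assume a: "length es = k n \<and> distinct es \<and> linear_rgraph n (r n) (set es)
       \<and> 1 \<le> i \<and> i \<le> k n \<and> Lin_bar (r n) n (m n) es i \<noteq> {}"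
      show "\<bar>prob_hit (r n) n (m n) es i
          - real (m n - i + 1) * real (r n choose 2) * real ((n - r n) choose (r n - 2))
            / real (n choose r n)\<bar>
       \<le> 400 * (real (r n) ^ 6 * real (m n) ^ 2 / real n ^ 3)"
        by (rule fixed_n[of "r n" "k n" "m n" n es i]) (use r3 km elim a in auto)
    qed
  qed
qed


end
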